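(* Let $\gamma>0$ and let $p,q\in L^1(\mathbb{R}_+)$ with supports in $[0,\gamma]$. Consider $(x,k)\in\mathbb{R}_+\times S(r)$, with $X,\Gamma,\Omega$ as defined in the context. Then the entries of $\Omega(x,k)$ satisfy $$ \partial_x\Omega_{j\ell}(x,k)=4k^3\,\Gamma_{j4}(x,k)\,f_\ell(x,k),\qquad j,\ell\in\{1,2,3,4\}, $$ where $(f_1,f_2,f_3,f_4)=(\varphi_2,\varphi_4,\psi_1,\psi_2)$.
   Context: Quasi-derivatives: $y^{[0]}=y$, $y^{[1]}=y'$, $y^{[2]}=y''$, $y^{[3]}=y'''+2py'$. For $k\in\mathbb{C}$ let $\varphi_j(x,k)$, $j=1,\dots,4$, be the solutions on $\mathbb{R}_+$ of $y''''+2(py')'+qy=k^4y$ with $y^{[m]}$ locally absolutely continuous and $\varphi_j^{[\ell-1]}(0,k)=\delta_{j\ell}$. Let $S=\{\arg k\in(0,\pi/4)\}$ and $S(r)=\{k\in S:|k|>r\}$. For $k\in S$ let $\psi_1,\psi_2$ be the Jost solutions of the same equation with $\psi_1(x,k)=e^{-kx}$ and $\psi_2(x,k)=e^{ikx}$ for $x>\gamma$. Here $r>0$ is large enough that $\psi_1,\psi_2$ are analytic on $S(r)$ and the matrix $X$ below is invertible there. Define the $4\times4$ matrix $X(x,k)$ whose columns are $(f^{[0]},f^{[1]},f^{[2]},f^{[3]})^\top$ for $f=\varphi_2,\varphi_4,\psi_1,\psi_2$, in this order. Define $\Gamma=(\Gamma_{j\ell})=X^{-1}$ and $\Omega=(\Omega_{j\ell})=X^{-1}\dot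 X$, where the dot denotes $\partial/\partial k$. *)

theory Defs
  imports "HOL-Analysis.Analysis"
begin

text \<open>Right-hand side of the first-order system for the quasi-derivative vector
  Y = (y, y', y'', y''' + 2 p y') of  y'''' + 2 (p y')' + q y = k^4 y :
  Y1' = Y2, Y2' = Y3, Y3' = Y4 - 2 p Y2, Y4' = (k^4 - q) Y1.\<close>
definition qrhs :: "(real \<Rightarrow> real) \<Rightarrow> (real \<Rightarrow> real) \<Rightarrow> complex \<Rightarrow> real
    \<Rightarrow> complex^4 \<Rightarrow> complex^4" where
  "qrhs p q k t Y = (\<chi> i. if i = 1 then Y$2
                      else if i = 2 then Y$3
                      else if i = 3 then Y$4 - 2 * complex_of_real (p t) * Y$2
                      else (k^4 - complex_of_real (q t)) * Y$1)"

text \<open>Y is the vector of quasi-derivatives (y^[0],...,y^[3]) of a solution on R_+,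
  all quasi-derivatives locally absolutely continuous (integral form).\<close>
definition qsol :: "(real \<Rightarrow> real) \<Rightarrow> (real \<Rightarrow> real) \<Rightarrow> complex \<Rightarrow> (real \<Rightarrow> complex^4) \<Rightarrow> bool" where
  "qsol p q k Y \<longleftrightarrow> (\<forall>x\<ge>0. (\<lambda>t. qrhs p q k t (Y t)) absolutely_integrable_on {0..x}
      \<and> Y x = Y 0 + integral {0..x} (\<lambda>t. qrhs p q k t (Y t)))"

definition sectorS :: "complex set" where
  "sectorS = {k. k \<noteq> 0 \<and> 0 < Arg k \<and> Arg k < pi/4}"

definition sectorSr :: "real \<Rightarrow> complex set" where
  "sectorSr r = {k \<in> sectorS. r < norm k}"

definition Xmat :: "(4 \<Rightarrow> real \<Rightarrow> complex \<Rightarrow> complex^4) \<Rightarrow> real \<Rightarrow> complex \<Rightarrow> complex^4^4" where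
  "Xmat F x k = (\<chi> m c. F c x k $ m)"

definition Xdot :: "(4 \<Rightarrow> real \<Rightarrow> complex \<Rightarrow> complex^4) \<Rightarrow> real \<Rightarrow> complex \<Rightarrow> complex^4^4" where
  "Xdot F x k = (\<chi> m c. deriv (\<lambda>\<kappa>. F c x \<kappa> $ m) k)"

definition Gmat :: "(4 \<Rightarrow> real \<Rightarrow> complex \<Rightarrow> complex^4) \<Rightarrow> real \<Rightarrow> complex \<Rightarrow> complex^4^4" where
  "Gmat F x k = matrix_inv (Xmat F x k)"

definition Omat :: "(4 \<Rightarrow> real \<Rightarrow> complex \<Rightarrow> complex^4) \<Rightarrow> real \<Rightarrow> complex \<Rightarrow> complex^4^4" where
  "Omat F x k = matrix_inv (Xmat F x k) ** Xdot F x k"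

definition cols :: "'a \<Rightarrow> 'a \<Rightarrow> 'a \<Rightarrow> 'a \<Rightarrow> 4 \<Rightarrow> 'a" where
  "cols a b c d i = (if i = 1 then a else if i = 2 then b else if i = 3 then c else d)"

end

theory Submission
  imports Defs
begin


lemma sigma_finite_lebesgue: "sigma_finite_measure (lebesgue :: real measure)"
proof
  let ?A = "range (\<lambda>n::nat. {-real n..real n})"
  have l: "\<And>n::nat. {-real n..real n} \<in> lmeasurable" using lmeasurable_cbox[of "-real n" "real n" for n] by simp
  then have m: "\<forall>a\<in>?A. emeasure lebesgue a \<noteq> \<infinity>"
    by (auto simp add: fmeasurable_def)
  have u: "\<Union> ?A = space lebesgue"
  proof -
    have "\<exists>n::nat. x \<in> {-real n..real n}" for x :: real
    proof -
      obtain n::nat where "abs x \<le> real n" using real_arch_simple by blast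
      then show ?thesis by (intro exI[of _ n]) auto
    qed
    then show ?thesis by auto
  qed
  have s: "?A \<subseteq> sets lebesgue" using l by (auto simp: fmeasurable_def)
  show "\<exists>A. countable A \<and> A \<subseteq> sets (lebesgue::real measure) \<and> \<Union> A = space lebesgue \<and> (\<forall>a\<in>A. emeasure lebesgue a \<noteq> \<infinity>)"
    apply (rule exI[of _ ?A])
    using m u s by (intro conjI) auto
qed

interpretation leb: sigma_finite_measure "lebesgue :: real measure"
  by (rule sigma_finite_lebesgue)

interpretation leb_pair: pair_sigma_finite "lebesgue :: real measure" "lebesgue :: real measure" ..

lemma id_borel_leb[measurable]: "(\<lambda>x::real. x) \<in> borel_measurable lebesgue"
  by (rule measurable_completion) (simp add: measurable_ident_sets)

lemma prod_fubini:
  fixes g h :: "real \<Rightarrow> complex" and x :: real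
  assumes x: "0 \<le> x" and g: "g absolutely_integrable_on {0..x}" and h: "h absolutely_integrable_on {0..x}"
  shows "(\<lambda>s. g s * integral {0..s} h) absolutely_integrable_on {0..x}"
    "(\<lambda>t. h t * integral {0..t} g) absolutely_integrable_on {0..x}"
    "integral {0..x} (\<lambda>s. g s * integral {0..s} h) + integral {0..x} (\<lambda>t. h t * integral {0..t} g)
       = integral {0..x} g * integral {0..x} h"
proof -
  define G where "G = (\<lambda>s. indicator {0..x} s *\<^sub>R g s)"
  define H where "H = (\<lambda>t. indicator {0..x} t *\<^sub>R h t)"
  have Gi: "integrable lebesgue G" using g by (simp add: set_integrable_def G_def)
  have Hi: "integrable lebesgue H" using h by (simp add: set_integrable_def H_def)
  have Gm[measurable]: "G \<in> borel_measurable lebesgue" using Gi by (rule borel_measurable_integrable)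
  have Hm[measurable]: "H \<in> borel_measurable lebesgue" using Hi by (rule borel_measurable_integrable)
  define F where "F s t = G s * H t" for s t
  define F1 where "F1 s t = G s * H t * of_bool (t \<le> s)" for s t
  define F2 where "F2 s t = G s * H t * of_bool (s < t)" for s t
  have Fm: "case_prod F \<in> borel_measurable (lebesgue \<Otimes>\<^sub>M lebesgue)" unfolding F_def by measurable
  have F1m: "case_prod F1 \<in> borel_measurable (lebesgue \<Otimes>\<^sub>M lebesgue)" unfolding F1_def by measurable
  have F2m: "case_prod F2 \<in> borel_measurable (lebesgue \<Otimes>\<^sub>M lebesgue)" unfolding F2_def by measurable
  have Fi: "integrable (lebesgue \<Otimes>\<^sub>M lebesgue) (case_prod F)"
  proof (rule leb_pair.Fubini_integrable[OF Fm])
    have "(\<lambda>s. \<integral>t. norm (case_prod F (s, t)) \<partial>lebesgue) = (\<lambda>s. norm (G s) * (\<integral>t. norm (H t) \<partial>lebesgue))"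
      by (simp add: F_def norm_mult)
    then show "integrable lebesgue (\<lambda>s. \<integral>t. norm (case_prod F (s, t)) \<partial>lebesgue)"
      using Gi by simp
    show "AE s in lebesgue. integrable lebesgue (\<lambda>t. case_prod F (s, t))"
      using Hi by (simp add: F_def)
  qed
  have F1i: "integrable (lebesgue \<Otimes>\<^sub>M lebesgue) (case_prod F1)"
    by (rule Bochner_Integration.integrable_bound[OF Fi F1m]) (auto simp: F_def F1_def norm_mult)
  have F2i: "integrable (lebesgue \<Otimes>\<^sub>M lebesgue) (case_prod F2)"
    by (rule Bochner_Integration.integrable_bound[OF Fi F2m]) (auto simp: F_def F2_def norm_mult)
  have FF: "case_prod F = (\<lambda>p. case_prod F1 p + case_prod F2 p)"
    by (auto simp: F_def F1_def F2_def fun_eq_iff)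
  have tot: "integral\<^sup>L (lebesgue \<Otimes>\<^sub>M lebesgue) (case_prod F)
     = integral\<^sup>L (lebesgue \<Otimes>\<^sub>M lebesgue) (case_prod F1) + integral\<^sup>L (lebesgue \<Otimes>\<^sub>M lebesgue) (case_prod F2)"
    unfolding FF by (rule Bochner_Integration.integral_add[OF F1i F2i])
  have HK: "integral {0..s} f = (\<integral>t. indicator {0..s} t *\<^sub>R f t \<partial>lebesgue)"
    if "f absolutely_integrable_on {0..x}" "0 \<le> s" "s \<le> x" for f :: "real \<Rightarrow> complex" and s
  proof -
    have "f absolutely_integrable_on {0..s}"
      by (rule set_integrable_subset[OF that(1)]) (use that in auto)
    then show ?thesis
      using set_lebesgue_integral_eq_integral(2) by (metis set_lebesgue_integral_def)
  qed
  define A1 where "A1 = (\<lambda>s. indicator {0..x} s *\<^sub>R (g s * integral {0..s} h))"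
  define A2 where "A2 = (\<lambda>t. indicator {0..x} t *\<^sub>R (h t * integral {0..t} g))"
  have in1: "(\<integral>t. F1 s t \<partial>lebesgue) = A1 s" for s
  proof (cases "s \<in> {0..x}")
    case True
    have "(\<integral>t. F1 s t \<partial>lebesgue) = G s * (\<integral>t. H t * of_bool (t \<le> s) \<partial>lebesgue)"
      unfolding F1_def mult.assoc by (rule integral_mult_right_zero)
    also have "(\<lambda>t. H t * of_bool (t \<le> s)) = (\<lambda>t. indicator {0..s} t *\<^sub>R h t)"
      using True by (auto simp: H_def fun_eq_iff indicator_def)
    also have "(\<integral>t. indicator {0..s} t *\<^sub>R h t \<partial>lebesgue) = integral {0..s} h"
      using HK[OF h] True by simp
    finally show ?thesis using True by (simp add: A1_def G_def)
  next
    case False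
    then show ?thesis by (simp add: A1_def F1_def G_def)
  qed
  have in2: "(\<integral>s. F2 s t \<partial>lebesgue) = A2 t" for t
  proof (cases "t \<in> {0..x}")
    case True
    have "(\<integral>s. F2 s t \<partial>lebesgue) = (\<integral>s. G s * of_bool (s < t) \<partial>lebesgue) * H t"
      unfolding F2_def by (subst integral_mult_left_zero[symmetric]) (simp add: ac_simps)
    also have "(\<integral>s. G s * of_bool (s < t) \<partial>lebesgue) = (\<integral>s. indicator {0..t} s *\<^sub>R g s \<partial>lebesgue)"
    proof (rule integral_cong_AE)
      show "(\<lambda>s. G s * of_bool (s < t)) \<in> borel_measurable lebesgue" by measurable
      have "set_integrable lebesgue {0..t} g"
        by (rule set_integrable_subset[OF g]) (use True in auto)
      then show "(\<lambda>s. indicator {0..t} s *\<^sub>R g s) \<in> borel_measurable lebesgue"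
        unfolding set_integrable_def by (rule borel_measurable_integrable)
      have "AE s in lebesgue. s \<noteq> t"
        by (rule AE_completion[OF AE_lborel_singleton])
      then show "AE s in lebesgue. G s * of_bool (s < t) = indicator {0..t} s *\<^sub>R g s"
        by eventually_elim (use True in \<open>auto simp: G_def indicator_def\<close>)
    qed
    also have "(\<integral>s. indicator {0..t} s *\<^sub>R g s \<partial>lebesgue) = integral {0..t} g"
      using HK[OF g] True by simp
    finally show ?thesis using True by (simp add: A2_def H_def mult.commute)
  next
    case False
    then show ?thesis by (simp add: A2_def F2_def H_def)
  qed
  have A1i: "integrable lebesgue A1"
    using leb_pair.integrable_fst[OF F1i] in1 by simp
  have A2i: "integrable lebesgue A2"
    using leb_pair.integrable_snd[OF F2i] in2 by simp
  have e1: "integral\<^sup>L (lebesgue \<Otimes>\<^sub>M lebesgue) (case_prod F1) = integral\<^sup>L lebesgue A1"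
    using leb_pair.integral_fst[OF F1i] in1 by simp
  have e2: "integral\<^sup>L (lebesgue \<Otimes>\<^sub>M lebesgue) (case_prod F2) = integral\<^sup>L lebesgue A2"
    using leb_pair.integral_snd[OF F2i] in2 by simp
  have e0: "integral\<^sup>L (lebesgue \<Otimes>\<^sub>M lebesgue) (case_prod F) = integral\<^sup>L lebesgue G * integral\<^sup>L lebesgue H"
    using leb_pair.integral_fst[OF Fi] by (simp add: F_def[abs_def])
  show s1: "(\<lambda>s. g s * integral {0..s} h) absolutely_integrable_on {0..x}"
    using A1i by (simp add: A1_def set_integrable_def)
  show s2: "(\<lambda>t. h t * integral {0..t} g) absolutely_integrable_on {0..x}"
    using A2i by (simp add: A2_def set_integrable_def)
  have "integral\<^sup>L lebesgue G = integral {0..x} g"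
    using set_lebesgue_integral_eq_integral(2)[OF g] by (simp add: set_lebesgue_integral_def G_def)
  moreover have "integral\<^sup>L lebesgue H = integral {0..x} h"
    using set_lebesgue_integral_eq_integral(2)[OF h] by (simp add: set_lebesgue_integral_def H_def)
  moreover have "integral\<^sup>L lebesgue A1 = integral {0..x} (\<lambda>s. g s * integral {0..s} h)"
    using set_lebesgue_integral_eq_integral(2)[OF s1] by (simp add: set_lebesgue_integral_def A1_def)
  moreover have "integral\<^sup>L lebesgue A2 = integral {0..x} (\<lambda>t. h t * integral {0..t} g)"
    using set_lebesgue_integral_eq_integral(2)[OF s2] by (simp add: set_lebesgue_integral_def A2_def)
  ultimately show "integral {0..x} (\<lambda>s. g s * integral {0..s} h) + integral {0..x} (\<lambda>t. h t * integral {0..t} g)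
       = integral {0..x} g * integral {0..x} h"
    using tot e0 e1 e2 by simp
qed



lemma ai_integrable: "(f::real\<Rightarrow>complex) absolutely_integrable_on S \<Longrightarrow> f integrable_on S"
  by (rule set_lebesgue_integral_eq_integral(1))

lemma ai_integrable4: "(f::real\<Rightarrow>complex^4) absolutely_integrable_on S \<Longrightarrow> f integrable_on S"
  by (rule set_lebesgue_integral_eq_integral(1))

lemma ring_aux: "(A::complex) + B = G * H \<Longrightarrow> (u0 + G) * (v0 + H) = u0 * v0 + (v0 * G + A + (u0 * H + B))"
  by algebra

lemma prod_rule:
  fixes g h :: "real \<Rightarrow> complex" and x :: real
  assumes x: "0 \<le> x" and g: "g absolutely_integrable_on {0..x}" and h: "h absolutely_integrable_on {0..x}"
    and u: "\<And>t. t \<in> {0..x} \<Longrightarrow> u t = u0 + integral {0..t} g"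
    and v: "\<And>t. t \<in> {0..x} \<Longrightarrow> v t = v0 + integral {0..t} h"
  shows "(\<lambda>t. g t * v t + u t * h t) integrable_on {0..x}"
    "u x * v x = u0 * v0 + integral {0..x} (\<lambda>t. g t * v t + u t * h t)"
proof -
  note P = prod_fubini[OF x g h]
  have gi: "g integrable_on {0..x}" and hi: "h integrable_on {0..x}" using ai_integrable[OF g] ai_integrable[OF h] by auto
  have i1: "(\<lambda>s. g s * integral {0..s} h) integrable_on {0..x}" using ai_integrable[OF P(1)] .
  have i2: "(\<lambda>s. h s * integral {0..s} g) integrable_on {0..x}" using ai_integrable[OF P(2)] .
  define E where "E = (\<lambda>t. v0 * g t + g t * integral {0..t} h + (u0 * h t + h t * integral {0..t} g))"
  have eq: "g t * v t + u t * h t = E t" if "t \<in> {0..x}" for t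
    using u[OF that] v[OF that] by (simp add: E_def algebra_simps)
  have Ei: "E integrable_on {0..x}" unfolding E_def
    by (intro integrable_add integrable_on_mult_right i1 i2 gi hi)
  have Eint: "integral {0..x} E = v0 * integral {0..x} g + integral {0..x} (\<lambda>s. g s * integral {0..s} h)
      + (u0 * integral {0..x} h + integral {0..x} (\<lambda>s. h s * integral {0..s} g))"
    unfolding E_def
    by (simp add: integral_add integrable_add integrable_on_mult_right i1 i2 gi hi)
  show "(\<lambda>t. g t * v t + u t * h t) integrable_on {0..x}"
    using integrable_cong[of "{0..x}" "\<lambda>t. g t * v t + u t * h t" E, OF eq] Ei by simp
  have "integral {0..x} (\<lambda>t. g t * v t + u t * h t) = integral {0..x} E"
    using eq by (rule integral_cong)
  then show "u x * v x = u0 * v0 + integral {0..x} (\<lambda>t. g t * v t + u t * h t)"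
  proof -
    have ux: "u x = u0 + integral {0..x} g" and vx: "v x = v0 + integral {0..x} h" using u[of x] v[of x] x by auto
    show ?thesis unfolding \<open>integral {0..x} (\<lambda>t. g t * v t + u t * h t) = integral {0..x} E\<close> Eint ux vx
      by (rule ring_aux[OF P(3)])
  qed
qed

lemma qsol_comp:
  assumes "qsol p q k Y" "0 \<le> x"
  shows "(\<lambda>t. qrhs p q k t (Y t) $ i) absolutely_integrable_on {0..x}"
    "Y x $ i = Y 0 $ i + integral {0..x} (\<lambda>t. qrhs p q k t (Y t) $ i)"
proof -
  have a: "(\<lambda>t. qrhs p q k t (Y t)) absolutely_integrable_on {0..x}"
   and e: "Y x = Y 0 + integral {0..x} (\<lambda>t. qrhs p q k t (Y t))"
    using assms unfolding qsol_def by blast+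
  show "(\<lambda>t. qrhs p q k t (Y t) $ i) absolutely_integrable_on {0..x}"
    using absolutely_integrable_linear[OF a bounded_linear_vec_nth[of i]] by (simp add: o_def)
  have "integral {0..x} (\<lambda>t. qrhs p q k t (Y t) $ i) = integral {0..x} (\<lambda>t. qrhs p q k t (Y t)) $ i"
    using integral_linear[OF ai_integrable4[OF a] bounded_linear_vec_nth[of i]] by (simp add: o_def)
  then show "Y x $ i = Y 0 $ i + integral {0..x} (\<lambda>t. qrhs p q k t (Y t) $ i)"
    using e by simp
qed

lemma qrhs_c:
  "qrhs p q k t Y $ 1 = Y$2" "qrhs p q k t Y $ 2 = Y$3"
  "qrhs p q k t Y $ 3 = Y$4 - 2 * complex_of_real (p t) * Y$2"
  "qrhs p q k t Y $ 4 = (k^4 - complex_of_real (q t)) * Y$1"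
  by (simp_all add: qrhs_def)

definition brk :: "complex^4 \<Rightarrow> complex^4 \<Rightarrow> complex" where
  "brk Y Z = Y$1 * Z$4 - Y$2 * Z$3 + Y$3 * Z$2 - Y$4 * Z$1"

lemma bracket:
  assumes Y: "qsol p q k Y" and Z: "qsol p q \<kappa> Z" and x: "0 \<le> x"
  shows "brk (Y x) (Z x) = brk (Y 0) (Z 0) + (\<kappa>^4 - k^4) * integral {0..x} (\<lambda>t. Y t $ 1 * Z t $ 1)"
proof -
  define a where "a i = (\<lambda>t. qrhs p q k t (Y t) $ i)" for i
  define b where "b i = (\<lambda>t. qrhs p q \<kappa> t (Z t) $ i)" for i
  have ai: "a i absolutely_integrable_on {0..x}" for i unfolding a_def by (rule qsol_comp(1)[OF Y x])
  have bi: "b i absolutely_integrable_on {0..x}" for i unfolding b_def by (rule qsol_comp(1)[OF Z x])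
  have ye: "Y t $ i = Y 0 $ i + integral {0..t} (a i)" if "t \<in> {0..x}" for i t
    unfolding a_def using that by (intro qsol_comp(2)[OF Y]) auto
  have ze: "Z t $ i = Z 0 $ i + integral {0..t} (b i)" if "t \<in> {0..x}" for i t
    unfolding b_def using that by (intro qsol_comp(2)[OF Z]) auto
  note PR = prod_rule[OF x ai bi ye ze]
  define e where "e i j = (\<lambda>t. a i t * Z t $ j + Y t $ i * b j t)" for i j
  have ei: "e i j integrable_on {0..x}" for i j unfolding e_def by (rule PR(1))
  have ee: "Y x $ i * Z x $ j = Y 0 $ i * Z 0 $ j + integral {0..x} (e i j)" for i j unfolding e_def by (rule PR(2))
  have pt: "e 1 4 t - e 2 3 t + e 3 2 t - e 4 1 t = (\<kappa>^4 - k^4) * (Y t $ 1 * Z t $ 1)" for t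
    unfolding e_def a_def b_def qrhs_c by algebra
  have "integral {0..x} (e 1 4) - integral {0..x} (e 2 3) + integral {0..x} (e 3 2) - integral {0..x} (e 4 1)
     = integral {0..x} (\<lambda>t. e 1 4 t - e 2 3 t + e 3 2 t - e 4 1 t)"
    by (simp add: integral_add integral_diff integrable_add integrable_diff ei)
  also have "\<dots> = (\<kappa>^4 - k^4) * integral {0..x} (\<lambda>t. Y t $ 1 * Z t $ 1)"
    unfolding pt by simp
  finally show ?thesis
    unfolding brk_def ee by (simp add: algebra_simps)
qed



definition Jm :: "complex^4^4" where
  "Jm = (\<chi> i j. if i = 1 \<and> j = 4 then 1 else if i = 2 \<and> j = 3 then -1
        else if i = 3 \<and> j = 2 then 1 else if i = 4 \<and> j = 1 then -1 else 0)"

definition Xm :: "(4 \<Rightarrow> real \<Rightarrow> complex^4) \<Rightarrow> real \<Rightarrow> complex^4^4" where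
  "Xm Fk t = (\<chi> m c. Fk c t $ m)"

definition Tm :: "(4 \<Rightarrow> real \<Rightarrow> complex^4) \<Rightarrow> real \<Rightarrow> complex^4^4" where
  "Tm Fk t = transpose (Xm Fk t) ** Jm"

lemma Tm_mult: "(Tm Fk t *v Z) $ a = brk (Fk a t) Z"
  by (simp add: Tm_def matrix_vector_mult_def matrix_matrix_mult_def transpose_def Xm_def Jm_def
      brk_def sum_4 algebra_simps)

lemma Tm_14: "Tm Fk t $ a $ 4 = Fk a t $ 1"
  by (simp add: Tm_def matrix_matrix_mult_def transpose_def Xm_def Jm_def sum_4)

lemma Jm_inv: "Jm ** (- Jm) = mat 1" "(- Jm) ** Jm = mat 1"
  by (simp_all add: vec_eq_iff forall_4 matrix_matrix_mult_def sum_4 Jm_def mat_def)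

lemma Jm_invertible: "invertible Jm"
  unfolding invertible_def using Jm_inv by blast

lemma invertible_transpose_c:
  fixes A :: "complex^'n^'n"
  assumes "invertible A" shows "invertible (transpose A)"
proof -
  obtain A' where "A ** A' = mat 1" "A' ** A = mat 1" using assms unfolding invertible_def by blast
  then have "transpose A ** transpose A' = mat 1" "transpose A' ** transpose A = mat 1"
    by (metis matrix_transpose_mul transpose_mat)+
  then show ?thesis unfolding invertible_def by blast
qed

lemma minv:
  fixes A :: "complex^'n^'n"
  assumes "invertible A" shows "matrix_inv A ** A = mat 1" "A ** matrix_inv A = mat 1"
proof -
  have "\<exists>A'. A ** A' = mat 1 \<and> A' ** A = mat 1" using assms unfolding invertible_def by blast
  then have "A ** matrix_inv A = mat 1 \<and> matrix_inv A ** A = mat 1"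
    unfolding matrix_inv_def by (rule someI_ex)
  then show "matrix_inv A ** A = mat 1" "A ** matrix_inv A = mat 1" by auto
qed


definition IY :: "(4 \<Rightarrow> real \<Rightarrow> complex^4) \<Rightarrow> (real \<Rightarrow> complex \<Rightarrow> complex^4) \<Rightarrow> real \<Rightarrow> complex \<Rightarrow> complex^4" where
  "IY Fk Y t \<kappa> = (\<chi> a. integral {0..t} (\<lambda>s. Fk a s $ 1 * Y s \<kappa> $ 1))"

definition Bm :: "(4 \<Rightarrow> real \<Rightarrow> complex^4) \<Rightarrow> complex^4^4" where
  "Bm Fk = Tm Fk 0 ** Xm Fk 0"

lemma mult_Xm_col: "(A ** Xm Fk t) $ a $ b = (A *v Fk b t) $ a"
  by (simp add: matrix_matrix_mult_def matrix_vector_mult_def Xm_def)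

lemma alg_core:
  assumes Fs: "\<And>c. qsol p q k (Fk c)" and inv: "\<And>t. 0 \<le> t \<Longrightarrow> invertible (Xm Fk t)"
  shows "invertible (Bm Fk)"
    and "0 \<le> t \<Longrightarrow> matrix_inv (Xm Fk t) = matrix_inv (Bm Fk) ** Tm Fk t"
    and "0 \<le> t \<Longrightarrow> qsol p q \<kappa> (\<lambda>t. Y t \<kappa>) \<Longrightarrow>
       Y t \<kappa> = (Xm Fk t ** matrix_inv (Bm Fk)) *v (Tm Fk 0 *v Y 0 \<kappa> + (\<kappa>^4 - k^4) *s IY Fk Y t \<kappa>)"
proof -
  have TX: "Tm Fk t ** Xm Fk t = Bm Fk" if "0 \<le> t" for t
  proof -
    have "brk (Fk a t) (Fk b t) = brk (Fk a 0) (Fk b 0)" for a b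
      using bracket[OF Fs[of a] Fs[of b] that] by simp
    then show ?thesis unfolding Bm_def by (simp add: vec_eq_iff mult_Xm_col Tm_mult)
  qed
  show Binv: "invertible (Bm Fk)"
    unfolding Bm_def Tm_def
    by (intro invertible_mult invertible_transpose_c inv Jm_invertible) simp_all
  show G: "matrix_inv (Xm Fk t) = matrix_inv (Bm Fk) ** Tm Fk t" if t: "0 \<le> t" for t
  proof -
    have "Tm Fk t = Tm Fk t ** (Xm Fk t ** matrix_inv (Xm Fk t))" using minv(2)[OF inv[OF t]] by simp
    also have "\<dots> = Bm Fk ** matrix_inv (Xm Fk t)" by (simp add: matrix_mul_assoc TX[OF t])
    finally have "matrix_inv (Bm Fk) ** Tm Fk t = (matrix_inv (Bm Fk) ** Bm Fk) ** matrix_inv (Xm Fk t)"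
      by (simp add: matrix_mul_assoc)
    then show ?thesis using minv(1)[OF Binv] by simp
  qed
  assume t: "0 \<le> t" and Ys: "qsol p q \<kappa> (\<lambda>t. Y t \<kappa>)"
  have W: "Tm Fk t *v Y t \<kappa> = Tm Fk 0 *v Y 0 \<kappa> + (\<kappa>^4 - k^4) *s IY Fk Y t \<kappa>"
    using bracket[OF Fs Ys t] by (simp add: vec_eq_iff Tm_mult IY_def left_diff_distrib)
  have "Y t \<kappa> = (Xm Fk t ** matrix_inv (Xm Fk t)) *v Y t \<kappa>" using minv(2)[OF inv[OF t]] by simp
  also have "\<dots> = (Xm Fk t ** matrix_inv (Bm Fk)) *v (Tm Fk t *v Y t \<kappa>)"
    by (simp add: G[OF t] matrix_vector_mul_assoc matrix_mul_assoc)
  finally show "Y t \<kappa> = (Xm Fk t ** matrix_inv (Bm Fk)) *v (Tm Fk 0 *v Y 0 \<kappa> + (\<kappa>^4 - k^4) *s IY Fk Y t \<kappa>)"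
    using W by simp
qed



definition n1 :: "complex^4 \<Rightarrow> real" where "n1 v = (\<Sum>i\<in>UNIV. norm (v$i))"
definition msum :: "complex^4^4 \<Rightarrow> real" where "msum A = (\<Sum>i\<in>UNIV. \<Sum>j\<in>UNIV. norm (A$i$j))"

lemma n1_nonneg: "0 \<le> n1 v" by (simp add: n1_def sum_nonneg)
lemma msum_nonneg: "0 \<le> msum A" by (simp add: msum_def sum_nonneg)
lemma comp_le_n1: "norm (v$i) \<le> n1 v"
  unfolding n1_def by (rule member_le_sum) auto
lemma n1_add: "n1 (v + w) \<le> n1 v + n1 w"
  unfolding n1_def sum.distrib[symmetric] by (rule sum_mono) (simp add: norm_triangle_ineq)
lemma n1_smult: "n1 (c *s v) = norm c * n1 v"
  unfolding n1_def by (simp add: norm_mult sum_distrib_left)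
lemma n1_mv: "n1 (A *v v) \<le> msum A * n1 v"
proof -
  have "n1 (A *v v) = (\<Sum>i\<in>UNIV. norm (\<Sum>j\<in>UNIV. A$i$j * v$j))"
    by (simp add: n1_def matrix_vector_mult_def)
  also have "\<dots> \<le> (\<Sum>i\<in>UNIV. \<Sum>j\<in>UNIV. norm (A$i$j) * n1 v)"
  proof (rule sum_mono)
    fix i
    have "norm (\<Sum>j\<in>UNIV. A$i$j * v$j) \<le> (\<Sum>j\<in>UNIV. norm (A$i$j * v$j))" by (rule norm_sum)
    also have "\<dots> \<le> (\<Sum>j\<in>UNIV. norm (A$i$j) * n1 v)"
      by (rule sum_mono) (simp add: norm_mult mult_left_mono comp_le_n1)
    finally show "norm (\<Sum>j\<in>UNIV. A$i$j * v$j) \<le> (\<Sum>j\<in>UNIV. norm (A$i$j) * n1 v)" .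
  qed
  also have "\<dots> = msum A * n1 v" by (simp add: msum_def sum_distrib_right)
  finally show ?thesis .
qed

lemma qsol_cont:
  assumes "qsol p q k Y" "0 \<le> T"
  shows "continuous_on {0..T} (\<lambda>t. Y t $ i)"
proof -
  have ai: "(\<lambda>t. qrhs p q k t (Y t) $ i) integrable_on {0..T}"
    by (rule ai_integrable[OF qsol_comp(1)[OF assms]])
  have "continuous_on {0..T} (\<lambda>t. integral {0..t} (\<lambda>t. qrhs p q k t (Y t) $ i))"
    by (rule indefinite_integral_continuous_1[OF ai])
  then have c: "continuous_on {0..T} (\<lambda>t. Y 0 $ i + integral {0..t} (\<lambda>t. qrhs p q k t (Y t) $ i))"
    by (rule continuous_on_add[OF continuous_on_const])
  show ?thesis
  proof (rule continuous_on_eq[OF c])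
    fix x assume "x \<in> {0..T}"
    then show "Y 0 $ i + integral {0..x} (\<lambda>t. qrhs p q k t (Y t) $ i) = Y x $ i"
      using qsol_comp(2)[OF assms(1), of x i] by simp
  qed
qed

lemma int_bound:
  fixes f :: "real \<Rightarrow> complex" and Z :: "real \<Rightarrow> complex"
  assumes T: "0 \<le> T" and s: "s \<in> {0..T}" and cf: "continuous_on {0..T} f" and cZ: "continuous_on {0..T} Z"
    and M: "\<And>\<sigma>. \<sigma> \<in> {0..T} \<Longrightarrow> norm (Z \<sigma>) \<le> M"
  shows "norm (integral {0..s} (\<lambda>\<sigma>. f \<sigma> * Z \<sigma>)) \<le> integral {0..T} (\<lambda>\<sigma>. norm (f \<sigma>)) * M"
proof -
  have sub: "{0..s} \<subseteq> {0..T}" using s by auto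
  have cf': "continuous_on {0..s} f" and cZ': "continuous_on {0..s} Z"
    using continuous_on_subset[OF cf sub] continuous_on_subset[OF cZ sub] by auto
  have "norm (integral {0..s} (\<lambda>\<sigma>. f \<sigma> * Z \<sigma>)) \<le> integral {0..s} (\<lambda>\<sigma>. norm (f \<sigma>) * M)"
  proof (rule integral_norm_bound_integral)
    show "(\<lambda>\<sigma>. f \<sigma> * Z \<sigma>) integrable_on {0..s}"
      by (rule integrable_continuous_interval) (rule continuous_on_mult[OF cf' cZ'])
    show "(\<lambda>\<sigma>. norm (f \<sigma>) * M) integrable_on {0..s}"
      by (rule integrable_continuous_interval) (rule continuous_on_mult_right[OF continuous_on_norm[OF cf']])
    show "norm (f \<sigma> * Z \<sigma>) \<le> norm (f \<sigma>) * M" if "\<sigma> \<in> {0..s}" for \<sigma>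
      using M[of \<sigma>] that sub by (auto simp: norm_mult intro!: mult_left_mono)
  qed
  also have "\<dots> = integral {0..s} (\<lambda>\<sigma>. norm (f \<sigma>)) * M" by simp
  also have "\<dots> \<le> integral {0..T} (\<lambda>\<sigma>. norm (f \<sigma>)) * M"
  proof (rule mult_right_mono)
    show "integral {0..s} (\<lambda>\<sigma>. norm (f \<sigma>)) \<le> integral {0..T} (\<lambda>\<sigma>. norm (f \<sigma>))"
      by (rule integral_subset_le[OF sub])
         (auto intro!: integrable_continuous_interval continuous_on_norm cf cf')
    have "norm (Z 0) \<le> M" using M[of 0] T by simp
    then show "0 \<le> M" using norm_ge_zero[of "Z 0"] by linarith
  qed
  finally show ?thesis .
qed



lemma div_aux: "(R::complex) * (a + c * I) / d = R * (a / d + c / d * I)"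
  by (cases "d = 0") (simp_all add: field_simps)

lemma an_core:
  fixes Fk :: "4 \<Rightarrow> real \<Rightarrow> complex^4" and Y :: "real \<Rightarrow> complex \<Rightarrow> complex^4"
  assumes U: "open U" "k \<in> U"
    and Fs: "\<And>c. qsol p q k (Fk c)" and inv: "\<And>t. 0 \<le> t \<Longrightarrow> invertible (Xm Fk t)"
    and Ys: "\<And>\<kappa>. \<kappa> \<in> U \<Longrightarrow> qsol p q \<kappa> (\<lambda>t. Y t \<kappa>)"
    and Y0: "\<And>m. ((\<lambda>\<kappa>. Y 0 \<kappa> $ m) has_field_derivative Y0' $ m) (at k)"
    and T: "0 \<le> T"
  shows "((\<lambda>\<kappa>. Y T \<kappa> $ m) has_field_derivative
           ((Xm Fk T ** matrix_inv (Bm Fk)) *v (Tm Fk 0 *v Y0' + (4*k^3) *s IY Fk Y T k)) $ m) (at k)"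
proof -
  define Bi where "Bi = matrix_inv (Bm Fk)"
  define R where "R s = Xm Fk s ** Bi" for s
  define W0 where "W0 \<kappa> = Tm Fk 0 *v Y 0 \<kappa>" for \<kappa>
  have star: "Y s \<kappa> = R s *v (W0 \<kappa> + (\<kappa>^4 - k^4) *s IY Fk Y s \<kappa>)" if "\<kappa> \<in> U" "0 \<le> s" for \<kappa> s
    unfolding R_def W0_def Bi_def by (rule alg_core(3)[where Y=Y, OF Fs inv that(2) Ys[OF that(1)]])
  have stark: "Y s k = R s *v W0 k" if "0 \<le> s" for s
    using star[OF U(2) that] by simp
  have W0d: "((\<lambda>\<kappa>. W0 \<kappa> $ a) has_field_derivative (Tm Fk 0 *v Y0') $ a) (at k)" for a
  proof -
    have e: "(\<lambda>\<kappa>. W0 \<kappa> $ a) = (\<lambda>\<kappa>. \<Sum>i\<in>UNIV. Tm Fk 0 $ a $ i * Y 0 \<kappa> $ i)"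
      by (simp add: W0_def matrix_vector_mult_def)
    show ?thesis unfolding e by (simp add: matrix_vector_mult_def) (intro DERIV_sum DERIV_cmult Y0)
  qed
  have W0c: "((\<lambda>\<kappa>. W0 \<kappa> $ a) \<longlongrightarrow> W0 k $ a) (at k)" for a
    using DERIV_isCont[OF W0d[of a]] by (simp add: isCont_def)
  have cY: "continuous_on {0..T} (\<lambda>s. Y s \<kappa> $ i)" if "\<kappa> \<in> U" for \<kappa> i
    by (rule qsol_cont[OF Ys[OF that] T])
  have cF: "continuous_on {0..T} (\<lambda>s. Fk c s $ i)" for c i
    by (rule qsol_cont[OF Fs T])
  have cR: "continuous_on {0..T} (\<lambda>s. msum (R s))"
  proof -
    have e: "(\<lambda>s. msum (R s)) = (\<lambda>s. \<Sum>i\<in>UNIV. \<Sum>j\<in>UNIV. norm (\<Sum>m\<in>UNIV. Fk m s $ i * Bi $ m $ j))"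
      by (simp add: msum_def R_def matrix_matrix_mult_def Xm_def)
    show ?thesis unfolding e
      by (intro continuous_on_sum continuous_on_norm continuous_on_mult_right cF)
  qed
  obtain s0 where "s0 \<in> {0..T}" and s0: "\<forall>s\<in>{0..T}. msum (R s) \<le> msum (R s0)"
    using continuous_attains_sup[OF compact_Icc _ cR] T by auto
  define CR where "CR = msum (R s0)"
  have CR: "msum (R s) \<le> CR" if "s \<in> {0..T}" for s using s0 that CR_def by auto
  have CR0: "0 \<le> CR" unfolding CR_def by (rule msum_nonneg)
  define L where "L = (\<Sum>a\<in>UNIV. integral {0..T} (\<lambda>\<sigma>. norm (Fk a \<sigma> $ 1)))"
  have IB: "n1 (\<chi> a. integral {0..s} (\<lambda>\<sigma>. Fk a \<sigma> $ 1 * Z \<sigma>)) \<le> L * M"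
    if s: "s \<in> {0..T}" and cZ: "continuous_on {0..T} Z" and M: "\<And>\<sigma>. \<sigma> \<in> {0..T} \<Longrightarrow> norm (Z \<sigma>) \<le> M" for s Z M
  proof -
    have "n1 (\<chi> a. integral {0..s} (\<lambda>\<sigma>. Fk a \<sigma> $ 1 * Z \<sigma>))
        = (\<Sum>a\<in>UNIV. norm (integral {0..s} (\<lambda>\<sigma>. Fk a \<sigma> $ 1 * Z \<sigma>)))" by (simp add: n1_def)
    also have "\<dots> \<le> (\<Sum>a\<in>UNIV. integral {0..T} (\<lambda>\<sigma>. norm (Fk a \<sigma> $ 1)) * M)"
      by (rule sum_mono) (rule int_bound[OF T s cF cZ M])
    also have "\<dots> = L * M" by (simp add: L_def sum_distrib_right)
    finally show ?thesis .
  qed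
  have BND: "\<exists>M. (\<forall>s\<in>{0..T}. n1 (Y s \<kappa>) \<le> M) \<and> M \<le> CR * (n1 (W0 \<kappa>) + norm (\<kappa>^4 - k^4) * (L * M))"
    if \<kappa>U: "\<kappa> \<in> U" for \<kappa>
  proof -
    have cn: "continuous_on {0..T} (\<lambda>s. n1 (Y s \<kappa>))"
      unfolding n1_def by (intro continuous_on_sum continuous_on_norm cY[OF \<kappa>U])
    obtain s1 where s1: "s1 \<in> {0..T}" "\<forall>s\<in>{0..T}. n1 (Y s \<kappa>) \<le> n1 (Y s1 \<kappa>)"
      using continuous_attains_sup[OF compact_Icc _ cn] T by auto
    define M where "M = n1 (Y s1 \<kappa>)"
    have IYb: "n1 (IY Fk Y s1 \<kappa>) \<le> L * M"
      unfolding IY_def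
    proof (rule IB[OF s1(1) cY[OF \<kappa>U]])
      fix \<sigma> assume "\<sigma> \<in> {0..T}"
      then show "norm (Y \<sigma> \<kappa> $ 1) \<le> M"
        using s1(2) comp_le_n1[of "Y \<sigma> \<kappa>" 1] unfolding M_def by fastforce
    qed
    have "M = n1 (R s1 *v (W0 \<kappa> + (\<kappa>^4 - k^4) *s IY Fk Y s1 \<kappa>))"
      using star[OF \<kappa>U, of s1] s1 by (simp add: M_def)
    also have "\<dots> \<le> msum (R s1) * n1 (W0 \<kappa> + (\<kappa>^4 - k^4) *s IY Fk Y s1 \<kappa>)" by (rule n1_mv)
    also have "\<dots> \<le> CR * (n1 (W0 \<kappa>) + norm (\<kappa>^4 - k^4) * (L * M))"
    proof (rule mult_mono[OF CR[OF s1(1)] _ CR0 n1_nonneg])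
      have "n1 (W0 \<kappa> + (\<kappa>^4 - k^4) *s IY Fk Y s1 \<kappa>) \<le> n1 (W0 \<kappa>) + n1 ((\<kappa>^4 - k^4) *s IY Fk Y s1 \<kappa>)"
        by (rule n1_add)
      also have "\<dots> = n1 (W0 \<kappa>) + norm (\<kappa>^4 - k^4) * n1 (IY Fk Y s1 \<kappa>)" by (simp only: n1_smult)
      also have "\<dots> \<le> n1 (W0 \<kappa>) + norm (\<kappa>^4 - k^4) * (L * M)"
        using IYb by (simp add: mult_left_mono)
      finally show "n1 (W0 \<kappa> + (\<kappa>^4 - k^4) *s IY Fk Y s1 \<kappa>) \<le> n1 (W0 \<kappa>) + norm (\<kappa>^4 - k^4) * (L * M)" .
    qed
    finally show ?thesis using s1 M_def by blast
  qed
  have evU: "eventually (\<lambda>\<kappa>. \<kappa> \<in> U - {k}) (at k)" by (rule eventually_at_in_open[OF U])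
  have c4: "((\<lambda>\<kappa>. norm (\<kappa>^4 - k^4)) \<longlongrightarrow> 0) (at k)"
    by (intro tendsto_norm_zero LIM_zero tendsto_power tendsto_ident_at)
  have "((\<lambda>\<kappa>. CR * (norm (\<kappa>^4 - k^4) * L)) \<longlongrightarrow> CR * (0 * L)) (at k)"
    by (intro tendsto_mult tendsto_const c4)
  then have evS: "eventually (\<lambda>\<kappa>. CR * (norm (\<kappa>^4 - k^4) * L) < 1/2) (at k)"
    by (rule order_tendstoD(2)) (simp_all add: field_simps)
  have W0n: "((\<lambda>\<kappa>. n1 (W0 \<kappa>)) \<longlongrightarrow> n1 (W0 k)) (at k)"
    unfolding n1_def by (intro tendsto_sum tendsto_norm W0c)
  have evW: "eventually (\<lambda>\<kappa>. n1 (W0 \<kappa>) < n1 (W0 k) + 1) (at k)"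
    by (rule order_tendstoD(2)[OF W0n]) simp
  define Mb where "Mb = 2 * CR * (n1 (W0 k) + 1)"
  have evB: "eventually (\<lambda>\<kappa>. \<forall>s\<in>{0..T}. n1 (Y s \<kappa>) \<le> Mb) (at k)"
    using evU evS evW
  proof eventually_elim
    case (elim \<kappa>)
    then have \<kappa>U: "\<kappa> \<in> U" by simp
    obtain M where M1: "\<forall>s\<in>{0..T}. n1 (Y s \<kappa>) \<le> M"
      and M2: "M \<le> CR * (n1 (W0 \<kappa>) + norm (\<kappa>^4 - k^4) * (L * M))"
      using BND[OF \<kappa>U] by blast
    have "n1 (Y 0 \<kappa>) \<le> M" using M1 T by simp
    then have M0: "0 \<le> M" using n1_nonneg[of "Y 0 \<kappa>"] by linarith
    have "CR * (norm (\<kappa>^4 - k^4) * (L * M)) = (CR * (norm (\<kappa>^4 - k^4) * L)) * M" by (simp add: ac_simps)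
    also have "\<dots> \<le> 1/2 * M" using elim M0 by (intro mult_right_mono) simp_all
    finally have "M \<le> CR * n1 (W0 \<kappa>) + 1/2 * M" using M2 by (simp add: distrib_left)
    then have "M \<le> 2 * CR * n1 (W0 \<kappa>)" by simp
    also have "\<dots> \<le> Mb" unfolding Mb_def using elim CR0 by (intro mult_left_mono) simp_all
    finally show ?case using M1 by force
  qed
  define e where "e \<kappa> = CR * (n1 (W0 \<kappa> - W0 k) + norm (\<kappa>^4 - k^4) * (L * Mb))" for \<kappa>
  have evD: "eventually (\<lambda>\<kappa>. \<forall>s\<in>{0..T}. n1 (Y s \<kappa> - Y s k) \<le> e \<kappa>) (at k)"
    using evU evB
  proof eventually_elim
    case (elim \<kappa>)
    then have \<kappa>U: "\<kappa> \<in> U" by simp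
    show ?case
    proof
      fix s assume s: "s \<in> {0..T}"
      have IYb: "n1 (IY Fk Y s \<kappa>) \<le> L * Mb"
        unfolding IY_def
      proof (rule IB[OF s cY[OF \<kappa>U]])
        fix \<sigma> assume "\<sigma> \<in> {0..T}"
        then show "norm (Y \<sigma> \<kappa> $ 1) \<le> Mb"
          using elim comp_le_n1[of "Y \<sigma> \<kappa>" 1] by fastforce
      qed
      have "Y s \<kappa> - Y s k = R s *v ((W0 \<kappa> - W0 k) + (\<kappa>^4 - k^4) *s IY Fk Y s \<kappa>)"
        using star[OF \<kappa>U, of s] stark[of s] s by (simp add: matrix_vector_mult_diff_distrib
          matrix_vector_right_distrib algebra_simps)
      then have "n1 (Y s \<kappa> - Y s k) \<le> msum (R s) * n1 ((W0 \<kappa> - W0 k) + (\<kappa>^4 - k^4) *s IY Fk Y s \<kappa>)"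
        using n1_mv by simp
      also have "\<dots> \<le> e \<kappa>"
        unfolding e_def
      proof (rule mult_mono[OF CR[OF s] _ CR0 n1_nonneg])
        have "n1 ((W0 \<kappa> - W0 k) + (\<kappa>^4 - k^4) *s IY Fk Y s \<kappa>) \<le> n1 (W0 \<kappa> - W0 k) + n1 ((\<kappa>^4 - k^4) *s IY Fk Y s \<kappa>)"
          by (rule n1_add)
        also have "\<dots> = n1 (W0 \<kappa> - W0 k) + norm (\<kappa>^4 - k^4) * n1 (IY Fk Y s \<kappa>)" by (simp only: n1_smult)
        also have "\<dots> \<le> n1 (W0 \<kappa> - W0 k) + norm (\<kappa>^4 - k^4) * (L * Mb)"
          using IYb by (simp add: mult_left_mono)
        finally show "n1 ((W0 \<kappa> - W0 k) + (\<kappa>^4 - k^4) *s IY Fk Y s \<kappa>) \<le> n1 (W0 \<kappa> - W0 k) + norm (\<kappa>^4 - k^4) * (L * Mb)" .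
      qed
      finally show "n1 (Y s \<kappa> - Y s k) \<le> e \<kappa>" .
    qed
  qed
  have Wd0: "((\<lambda>\<kappa>. n1 (W0 \<kappa> - W0 k)) \<longlongrightarrow> 0) (at k)"
  proof -
    have "((\<lambda>\<kappa>. \<Sum>i\<in>UNIV. norm (W0 \<kappa> $ i - W0 k $ i)) \<longlongrightarrow> (\<Sum>i\<in>(UNIV::4 set). 0)) (at k)"
      by (intro tendsto_sum tendsto_norm_zero LIM_zero W0c)
    then show ?thesis by (simp add: n1_def)
  qed
  have e0: "(e \<longlongrightarrow> 0) (at k)"
  proof -
    have "(e \<longlongrightarrow> CR * (0 + 0 * (L * Mb))) (at k)"
      unfolding e_def by (intro tendsto_mult tendsto_add tendsto_const Wd0 c4)
    then show ?thesis by simp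
  qed
  have Ilim: "((\<lambda>\<kappa>. IY Fk Y T \<kappa> $ a) \<longlongrightarrow> IY Fk Y T k $ a) (at k)" for a
  proof -
    have "((\<lambda>\<kappa>. IY Fk Y T \<kappa> $ a - IY Fk Y T k $ a) \<longlongrightarrow> 0) (at k)"
    proof (rule Lim_null_comparison)
      have "((\<lambda>\<kappa>. L * e \<kappa>) \<longlongrightarrow> L * 0) (at k)" by (intro tendsto_mult tendsto_const e0)
      then show "((\<lambda>\<kappa>. L * e \<kappa>) \<longlongrightarrow> 0) (at k)" by simp
      show "eventually (\<lambda>\<kappa>. norm (IY Fk Y T \<kappa> $ a - IY Fk Y T k $ a) \<le> L * e \<kappa>) (at k)"
        using evU evD
      proof eventually_elim
        case (elim \<kappa>)
        then have \<kappa>U: "\<kappa> \<in> U" by simp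
        have cZ: "continuous_on {0..T} (\<lambda>\<sigma>. Y \<sigma> \<kappa> $ 1 - Y \<sigma> k $ 1)"
          by (rule continuous_on_diff[OF cY[OF \<kappa>U] cY[OF U(2)]])
        have ie: "IY Fk Y T \<kappa> $ a - IY Fk Y T k $ a = integral {0..T} (\<lambda>\<sigma>. Fk a \<sigma> $ 1 * (Y \<sigma> \<kappa> $ 1 - Y \<sigma> k $ 1))"
        proof -
          have i1: "(\<lambda>\<sigma>. Fk a \<sigma> $ 1 * Y \<sigma> \<kappa> $ 1) integrable_on {0..T}"
            by (rule integrable_continuous_interval) (rule continuous_on_mult[OF cF cY[OF \<kappa>U]])
          have i2: "(\<lambda>\<sigma>. Fk a \<sigma> $ 1 * Y \<sigma> k $ 1) integrable_on {0..T}"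
            by (rule integrable_continuous_interval) (rule continuous_on_mult[OF cF cY[OF U(2)]])
          show ?thesis unfolding IY_def using integral_diff[OF i1 i2] by (simp add: right_diff_distrib)
        qed
        have "norm (integral {0..T} (\<lambda>\<sigma>. Fk a \<sigma> $ 1 * (Y \<sigma> \<kappa> $ 1 - Y \<sigma> k $ 1))) \<le> integral {0..T} (\<lambda>\<sigma>. norm (Fk a \<sigma> $ 1)) * e \<kappa>"
        proof (rule int_bound[OF T _ cF cZ])
          show "T \<in> {0..T}" using T by simp
          fix \<sigma> assume "\<sigma> \<in> {0..T}"
          then have "n1 (Y \<sigma> \<kappa> - Y \<sigma> k) \<le> e \<kappa>" using elim by blast
          then show "norm (Y \<sigma> \<kappa> $ 1 - Y \<sigma> k $ 1) \<le> e \<kappa>"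
            using comp_le_n1[of "Y \<sigma> \<kappa> - Y \<sigma> k" 1] by simp
        qed
        also have "\<dots> \<le> L * e \<kappa>"
        proof (rule mult_right_mono)
          show "integral {0..T} (\<lambda>\<sigma>. norm (Fk a \<sigma> $ 1)) \<le> L"
            unfolding L_def
            by (rule member_le_sum[where f="\<lambda>a. integral {0..T} (\<lambda>\<sigma>. norm (Fk a \<sigma> $ 1))"])
               (auto intro!: integral_nonneg integrable_continuous_interval continuous_on_norm cF)
          have "n1 (Y 0 \<kappa> - Y 0 k) \<le> e \<kappa>" using elim T by simp
          then show "0 \<le> e \<kappa>" using n1_nonneg[of "Y 0 \<kappa> - Y 0 k"] by linarith
        qed
        finally show ?case using ie by simp
      qed
    qed
    then show ?thesis by (simp add: LIM_zero_iff)
  qed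
  define D where "D = (Xm Fk T ** matrix_inv (Bm Fk)) *v (Tm Fk 0 *v Y0' + (4*k^3) *s IY Fk Y T k)"
  have Dsum: "D $ m = (\<Sum>i\<in>UNIV. R T $ m $ i * ((Tm Fk 0 *v Y0') $ i + 4*k^3 * IY Fk Y T k $ i))"
    by (simp add: D_def R_def Bi_def matrix_vector_mult_def)
  have Wq: "((\<lambda>\<kappa>. (W0 \<kappa> $ i - W0 k $ i) / (\<kappa> - k)) \<longlongrightarrow> (Tm Fk 0 *v Y0') $ i) (at k)" for i
    using has_field_derivative_iff[THEN iffD1, OF W0d[of i]] .
  have Pq: "((\<lambda>\<kappa>. (\<kappa>^4 - k^4) / (\<kappa> - k)) \<longlongrightarrow> 4*k^3) (at k)"
  proof -
    have "((\<lambda>\<kappa>::complex. \<kappa>^4) has_field_derivative of_nat 4 * (1 * k ^ (4 - Suc 0))) (at k)"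
      by (rule DERIV_power[OF DERIV_ident])
    then show ?thesis using has_field_derivative_iff[THEN iffD1] by fastforce
  qed
  have lim: "((\<lambda>\<kappa>. \<Sum>i\<in>UNIV. R T $ m $ i * ((W0 \<kappa> $ i - W0 k $ i) / (\<kappa> - k)
        + (\<kappa>^4 - k^4) / (\<kappa> - k) * IY Fk Y T \<kappa> $ i)) \<longlongrightarrow> D $ m) (at k)"
    unfolding Dsum by (intro tendsto_sum tendsto_mult_left tendsto_add tendsto_mult Ilim Wq Pq)
  have "((\<lambda>\<kappa>. (Y T \<kappa> $ m - Y T k $ m) / (\<kappa> - k)) \<longlongrightarrow> D $ m) (at k)"
  proof (rule Lim_transform_eventually[OF lim])
    show "eventually (\<lambda>\<kappa>. (\<Sum>i\<in>UNIV. R T $ m $ i * ((W0 \<kappa> $ i - W0 k $ i) / (\<kappa> - k)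
        + (\<kappa>^4 - k^4) / (\<kappa> - k) * IY Fk Y T \<kappa> $ i)) = (Y T \<kappa> $ m - Y T k $ m) / (\<kappa> - k)) (at k)"
      using evU
    proof eventually_elim
      case (elim \<kappa>)
      then have \<kappa>U: "\<kappa> \<in> U" and nk: "\<kappa> - k \<noteq> 0" by auto
      have VE: "Y T \<kappa> - Y T k = R T *v ((W0 \<kappa> - W0 k) + (\<kappa>^4 - k^4) *s IY Fk Y T \<kappa>)"
        using star[OF \<kappa>U T] stark[OF T] by (simp add: matrix_vector_mult_diff_distrib
          matrix_vector_right_distrib algebra_simps)
      have "Y T \<kappa> $ m - Y T k $ m = (\<Sum>i\<in>UNIV. R T $ m $ i * ((W0 \<kappa> $ i - W0 k $ i) + (\<kappa>^4 - k^4) * IY Fk Y T \<kappa> $ i))"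
        using arg_cong[where f="\<lambda>v. v $ m", OF VE] by (simp add: matrix_vector_mult_def left_diff_distrib)
      then have "(Y T \<kappa> $ m - Y T k $ m) / (\<kappa> - k) = (\<Sum>i\<in>UNIV. R T $ m $ i * ((W0 \<kappa> $ i - W0 k $ i) + (\<kappa>^4 - k^4) * IY Fk Y T \<kappa> $ i) / (\<kappa> - k))"
        by (simp add: sum_divide_distrib)
      also have "\<dots> = (\<Sum>i\<in>UNIV. R T $ m $ i * ((W0 \<kappa> $ i - W0 k $ i) / (\<kappa> - k)
        + (\<kappa>^4 - k^4) / (\<kappa> - k) * IY Fk Y T \<kappa> $ i))"
        by (rule sum.cong) (simp_all only: div_aux)
      finally show ?case by simp
    qed
  qed
  then show ?thesis unfolding D_def by (simp add: has_field_derivative_iff)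
qed



lemma open_sectorSr:
  assumes r: "0 < r" shows "open (sectorSr r)"
proof -
  have eq: "sectorSr r = (- \<real>\<^sub>\<le>\<^sub>0 \<inter> Arg -` {0<..<pi/4}) \<inter> {z. r < norm z}"
  proof (intro set_eqI iffI)
    fix z assume z: "z \<in> sectorSr r"
    then have z0: "z \<noteq> 0" and a: "0 < Arg z" "Arg z < pi/4" and n: "r < norm z"
      by (auto simp: sectorSr_def sectorS_def)
    have "z \<notin> \<real>\<^sub>\<le>\<^sub>0"
    proof
      assume "z \<in> \<real>\<^sub>\<le>\<^sub>0"
      then have "Re z \<le> 0" "Im z = 0" by (auto simp: complex_nonpos_Reals_iff)
      with z0 have "Re z < 0" "Im z = 0" by (auto simp: complex_eq_iff)
      then have "Arg z = pi" by (simp add: Arg_eq_pi)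
      with a pi_gt_zero show False by simp
    qed
    then show "z \<in> (- \<real>\<^sub>\<le>\<^sub>0 \<inter> Arg -` {0<..<pi/4}) \<inter> {z. r < norm z}" using a n by auto
  next
    fix z assume "z \<in> (- \<real>\<^sub>\<le>\<^sub>0 \<inter> Arg -` {0<..<pi/4}) \<inter> {z. r < norm z}"
    then show "z \<in> sectorSr r" using r by (auto simp: sectorSr_def sectorS_def)
  qed
  have cA: "continuous_on (- \<real>\<^sub>\<le>\<^sub>0) Arg"
    by (rule continuous_at_imp_continuous_on) (auto intro: continuous_at_Arg)
  have o1: "open (- \<real>\<^sub>\<le>\<^sub>0 \<inter> Arg -` {0<..<pi/4})"
    by (rule continuous_open_preimage[OF cA]) auto
  have o2: "open {z::complex. r < norm z}"
    by (rule open_Collect_less) (auto intro: continuous_intros)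
  show ?thesis unfolding eq using o1 o2 by (rule open_Int)
qed

theorem lemma2p2:
  fixes \<gamma> r :: real and p q :: "real \<Rightarrow> real"
    and phi2 phi4 psi1 psi2 :: "real \<Rightarrow> complex \<Rightarrow> complex^4"
  assumes "\<gamma> > 0" and "r > 0"
    and "p absolutely_integrable_on {0..}" and "q absolutely_integrable_on {0..}"
    and "\<forall>x>\<gamma>. p x = 0" and "\<forall>x>\<gamma>. q x = 0"
    and "\<forall>k. qsol p q k (\<lambda>x. phi2 x k) \<and> phi2 0 k = axis 2 1"
    and "\<forall>k. qsol p q k (\<lambda>x. phi4 x k) \<and> phi4 0 k = axis 4 1"
    and "\<forall>k\<in>sectorS. qsol p q k (\<lambda>x. psi1 x k) \<and> (\<forall>x>\<gamma>. psi1 x k $ 1 = exp (- k * of_real x))"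
    and "\<forall>k\<in>sectorS. qsol p q k (\<lambda>x. psi2 x k) \<and> (\<forall>x>\<gamma>. psi2 x k $ 1 = exp (\<i> * k * of_real x))"
    and "\<forall>x\<ge>0. \<forall>m. (\<lambda>k. psi1 x k $ m) analytic_on sectorSr r \<and> (\<lambda>k. psi2 x k $ m) analytic_on sectorSr r"
    and "\<forall>x\<ge>0. \<forall>k\<in>sectorSr r. invertible (Xmat (cols phi2 phi4 psi1 psi2) x k)"
  shows "\<forall>x\<ge>0. \<forall>k\<in>sectorSr r. \<forall>j l.
     ((\<lambda>t. Omat (cols phi2 phi4 psi1 psi2) t k $ j $ l) has_vector_derivative
        (4 * k^3 * Gmat (cols phi2 phi4 psi1 psi2) x k $ j $ 4 * cols phi2 phi4 psi1 psi2 l x k $ 1))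
       (at x within {0..})"
proof (intro allI impI ballI)
  fix x :: real and k :: complex and j l :: 4
  assume x: "0 \<le> x" and kU: "k \<in> sectorSr r"
  define F where "F = cols phi2 phi4 psi1 psi2"
  define U where "U = sectorSr r"
  have Uo: "open U" unfolding U_def using open_sectorSr[OF assms(2)] .
  have US: "U \<subseteq> sectorS" unfolding U_def sectorSr_def by auto
  have kU': "k \<in> U" using kU U_def by simp
  have F1: "F 1 = phi2" "F 2 = phi4" "F 3 = psi1" "F 4 = psi2" by (simp_all add: F_def cols_def)
  have Qs: "qsol p q \<kappa> (\<lambda>t. F c t \<kappa>)" if "\<kappa> \<in> U" for c \<kappa>
  proof -
    have s: "\<kappa> \<in> sectorS" using that US by auto
    from exhaust_4[of c] show ?thesis
      by (elim disjE) (use s assms(7-10) F1 in auto)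
  qed
  define Fk where "Fk c t = F c t k" for c t
  have Fs: "qsol p q k (Fk c)" for c
  proof -
    have "Fk c = (\<lambda>t. F c t k)" by (simp add: Fk_def fun_eq_iff)
    then show ?thesis using Qs[OF kU'] by simp
  qed
  have XX: "Xmat F t k = Xm Fk t" for t by (simp add: Xmat_def Xm_def Fk_def)
  have inv: "invertible (Xm Fk t)" if "0 \<le> t" for t
  proof -
    have "invertible (Xmat F t k)" using assms(12) that kU unfolding F_def by blast
    then show ?thesis unfolding XX .
  qed
  define Y0' where "Y0' = (\<chi> m. deriv (\<lambda>\<kappa>. F l 0 \<kappa> $ m) k)"
  have Y0: "((\<lambda>\<kappa>. F l 0 \<kappa> $ m) has_field_derivative Y0' $ m) (at k)" for m
  proof -
    have "(\<lambda>\<kappa>. F l 0 \<kappa> $ m) field_differentiable (at k)"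
    proof -
      have an1: "(\<lambda>\<kappa>. psi1 0 \<kappa> $ m) analytic_on U" and an2: "(\<lambda>\<kappa>. psi2 0 \<kappa> $ m) analytic_on U"
        using assms(11) U_def by auto
      have c1: "(\<lambda>\<kappa>. phi2 0 \<kappa> $ m) = (\<lambda>\<kappa>. axis 2 1 $ m)" using assms(7) by simp
      have c2: "(\<lambda>\<kappa>. phi4 0 \<kappa> $ m) = (\<lambda>\<kappa>. axis 4 1 $ m)" using assms(8) by simp
      from exhaust_4[of l] show ?thesis
      proof (elim disjE)
        assume "l = 1" then show ?thesis using c1 F1 by simp
      next
        assume "l = 2" then show ?thesis using c2 F1 by simp
      next
        assume "l = 3" then show ?thesis
          using F1 holomorphic_on_imp_differentiable_at[OF analytic_imp_holomorphic[OF an1] Uo kU'] by simp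
      next
        assume "l = 4" then show ?thesis
          using F1 holomorphic_on_imp_differentiable_at[OF analytic_imp_holomorphic[OF an2] Uo kU'] by simp
      qed
    qed
    then show ?thesis unfolding Y0'_def vec_lambda_beta by (rule DERIV_deriv_iff_field_differentiable[THEN iffD2])
  qed
  define Bi where "Bi = matrix_inv (Bm Fk)"
  define V where "V t = Tm Fk 0 *v Y0' + (4*k^3) *s IY Fk (\<lambda>t \<kappa>. F l t \<kappa>) t k" for t
  have dv: "((\<lambda>\<kappa>. F l t \<kappa> $ m) has_field_derivative ((Xm Fk t ** Bi) *v V t) $ m) (at k)"
    if "0 \<le> t" for t m
    unfolding Bi_def V_def
    by (rule an_core[where Y="\<lambda>t \<kappa>. F l t \<kappa>", OF Uo kU' Fs inv Qs Y0 that])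
  have Om: "Omat F t k $ j $ l = (Bi *v V t) $ j" if "0 \<le> t" for t
  proof -
    have "Xdot F t k $ m $ l = ((Xm Fk t ** Bi) *v V t) $ m" for m
      using DERIV_imp_deriv[OF dv[OF that]] by (simp add: Xdot_def)
    then have "Omat F t k $ j $ l = (matrix_inv (Xm Fk t) *v ((Xm Fk t ** Bi) *v V t)) $ j"
      by (simp add: Omat_def XX matrix_matrix_mult_def matrix_vector_mult_def)
    also have "\<dots> = (((matrix_inv (Xm Fk t) ** Xm Fk t) ** Bi) *v V t) $ j"
      by (simp add: matrix_vector_mul_assoc matrix_mul_assoc)
    also have "\<dots> = (Bi *v V t) $ j" using minv(1)[OF inv[OF that]] by simp
    finally show ?thesis .
  qed
  define \<phi> where "\<phi> a s = Fk a s $ 1 * F l s k $ 1" for a s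
  have Vj: "(Bi *v V t) $ j = (\<Sum>a\<in>UNIV. Bi$j$a * ((Tm Fk 0 *v Y0')$a + 4*k^3 * integral {0..t} (\<phi> a)))" for t
    by (simp add: V_def IY_def matrix_vector_mult_def \<phi>_def[abs_def])
  have c\<phi>: "continuous_on {0..T} (\<phi> a)" if "0 \<le> T" for a T
  proof -
    have "continuous_on {0..T} (\<lambda>s. Fk a s $ 1 * F l s k $ 1)"
      by (rule continuous_on_mult[OF qsol_cont[OF Fs that] qsol_cont[OF Qs[OF kU'] that]])
    then show ?thesis unfolding \<phi>_def[abs_def] .
  qed
  have di: "((\<lambda>t. integral {0..t} (\<phi> a)) has_vector_derivative \<phi> a x) (at x within {0..})" for a :: 4
  proof -
    have "((\<lambda>t. integral {0..t} (\<phi> a)) has_vector_derivative \<phi> a x) (at x within {0..x+1})"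
      by (rule integral_has_vector_derivative[OF c\<phi>]) (use x in auto)
    moreover have "at x within {0..x+1} = at x within {0..}"
      by (rule at_within_nhd[where S="{..<x+1}"]) auto
    ultimately show ?thesis by simp
  qed
  have dG: "((\<lambda>t. \<Sum>a\<in>UNIV. Bi$j$a * ((Tm Fk 0 *v Y0')$a + 4*k^3 * integral {0..t} (\<phi> a)))
     has_vector_derivative (\<Sum>a\<in>UNIV. Bi$j$a * (0 + 4*k^3 * \<phi> a x))) (at x within {0..})"
    by (intro has_vector_derivative_sum has_vector_derivative_mult_right has_vector_derivative_add
        has_vector_derivative_const di)
  have eqR: "(\<Sum>a\<in>UNIV. Bi$j$a * (0 + 4*k^3 * \<phi> a x)) = 4 * k^3 * Gmat F x k $ j $ 4 * F l x k $ 1"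
  proof -
    have "Gmat F x k $ j $ 4 = (\<Sum>a\<in>UNIV. Bi$j$a * Fk a x $ 1)"
      using alg_core(2)[OF Fs inv x] by (simp add: Gmat_def XX Bi_def matrix_matrix_mult_def Tm_14)
    then show ?thesis by (simp add: \<phi>_def sum_distrib_left sum_distrib_right ac_simps)
  qed
  have "((\<lambda>t. Omat F t k $ j $ l) has_vector_derivative (\<Sum>a\<in>UNIV. Bi$j$a * (0 + 4*k^3 * \<phi> a x))) (at x within {0..})"
    by (rule has_vector_derivative_transform[OF _ _ dG]) (use x Om Vj in auto)
  then show "((\<lambda>t. Omat (cols phi2 phi4 psi1 psi2) t k $ j $ l) has_vector_derivative
        (4 * k^3 * Gmat (cols phi2 phi4 psi1 psi2) x k $ j $ 4 * cols phi2 phi4 psi1 psi2 l x k $ 1))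
       (at x within {0..})"
    using eqR by (simp add: F_def)
qed

end
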